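(* Let $0<p\leqslant q:=1-p$, and let $\tilde f(z)$ and $\tilde g(z)$ be entire functions satisfying \[ \tilde{f}(z)=(1-e^{-pz})\tilde{f}(pz) +e^{-pz}\tilde{f}(qz) +\tilde{g}(z), \] with $\tilde f(0)=\tilde g(0)=0$. If $\tilde g(x)=O(x^\alpha(\log_+x)^\beta)$ for real $x\to\infty$, where $\alpha,\beta\in\mathbb{R}$ and $\log_+x:=\log(1+x)$, then, as $x\to\infty$ along the reals, \[ \tilde{f}(x) = \begin{cases} O(x^{\alpha}(\log_+x)^\beta), & \text{if }\alpha>0;\\ O((\log_+x)^{\beta+1}), & \text{if }\alpha=0,\ \beta>-1;\\ O(\log_+ \log_+ x), & \text{if }\alpha=0,\ \beta=-1;\\ O(1), &\text{if }\alpha=0,\ \beta<-1;\\ O(1), &\text{if } \alpha<0. \end{cases} \] *)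

theory Defs
  imports "HOL-Analysis.Analysis" "HOL-Library.Landau_Symbols"
begin

definition logp :: "real \<Rightarrow> real" where
  "logp x = ln (1 + x)"

end

theory Submission
  imports Defs "HOL-Real_Asymp.Real_Asymp"
begin

lemma rec_ineq:
  fixes p q y :: real and f g :: "complex \<Rightarrow> complex"
  assumes feq: "\<And>z. f z = (1 - exp (- (of_real p * z))) * f (of_real p * z)
                      + exp (- (of_real p * z)) * f (of_real q * z) + g z"
    and hp: "0 < p" and y: "0 \<le> y"
  shows "norm (f (of_real y)) \<le> max (norm (f (of_real (p*y)))) (norm (f (of_real (q*y)))) + norm (g (of_real y))"
proof -
  define w where "w = exp (- (p*y))"
  have w0: "0 < w" and w1: "w \<le> 1" using hp y by (auto simp: w_def)
  have e: "exp (- (of_real p * of_real y)) = (of_real w :: complex)"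
    by (simp add: w_def flip: exp_of_real)
  have "f (of_real y) = of_real (1 - w) * f (of_real (p*y)) + of_real w * f (of_real (q*y)) + g (of_real y)"
    using feq[of "of_real y"] by (simp add: e)
  hence "norm (f (of_real y)) \<le> norm (of_real (1 - w) * f (of_real (p*y)) + of_real w * f (of_real (q*y)) :: complex) + norm (g (of_real y))"
    by (simp only: norm_triangle_ineq)
  also have "\<dots> \<le> norm (of_real (1 - w) * f (of_real (p*y)) :: complex) + norm (of_real w * f (of_real (q*y)) :: complex) + norm (g (of_real y))"
    by (intro add_right_mono norm_triangle_ineq)
  also have "\<dots> = (1 - w) * norm (f (of_real (p*y))) + w * norm (f (of_real (q*y))) + norm (g (of_real y))"
  proof -
    have n1: "norm (of_real (1-w)::complex) = 1 - w" by (subst norm_of_real) (use w1 in simp)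
    have n2: "norm (of_real w::complex) = w" by (subst norm_of_real) (use w0 in simp)
    show ?thesis by (simp only: norm_mult n1 n2)
  qed
  also have "\<dots> \<le> (1 - w) * max (norm (f (of_real (p*y)))) (norm (f (of_real (q*y)))) + w * max (norm (f (of_real (p*y)))) (norm (f (of_real (q*y)))) + norm (g (of_real y))"
    using w0 w1 by (intro add_mono mult_left_mono) auto
  also have "\<dots> = max (norm (f (of_real (p*y)))) (norm (f (of_real (q*y)))) + norm (g (of_real y))"
    by (simp add: algebra_simps)
  finally show ?thesis .
qed

lemma levels:
  fixes F G :: "real \<Rightarrow> real" and a :: "nat \<Rightarrow> real"
  assumes rec: "\<And>y. y \<ge> 0 \<Longrightarrow> F y \<le> max (F (p*y)) (F (q*y)) + G y"
    and p: "0 < p" "p \<le> q" "q < 1" and x0: "x0 > 0"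
    and B: "\<And>y. 0 \<le> y \<Longrightarrow> y \<le> x0 \<Longrightarrow> F y \<le> B"
    and a: "\<And>j. a j \<ge> 0"
    and lev: "\<And>j y. x0 * (1/q)^j < y \<Longrightarrow> y \<le> x0*(1/q)^(Suc j) \<Longrightarrow> G y \<le> a (Suc j)"
  shows "0 \<le> y \<Longrightarrow> y \<le> x0 * (1/q)^j \<Longrightarrow> F y \<le> B + (\<Sum>i\<in>{1..j}. a i)"
proof (induction j arbitrary: y)
  case 0
  then show ?case using B by simp
next
  case (Suc j)
  have S: "(\<Sum>i\<in>{1..Suc j}. a i) = (\<Sum>i\<in>{1..j}. a i) + a (Suc j)" by simp
  show ?case
  proof (cases "y \<le> x0 * (1/q)^j")
    case True
    then show ?thesis using Suc.IH[OF Suc.prems(1)] a[of "Suc j"] S by linarith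
  next
    case False
    have q0: "q > 0" using p by linarith
    have "q*y \<le> q * (x0 * (1/q)^(Suc j))" using Suc.prems q0 by (intro mult_left_mono) auto
    also have "\<dots> = x0 * (1/q)^j" using q0 by simp
    finally have qy: "q*y \<le> x0 * (1/q)^j" .
    have py: "p*y \<le> q*y" using p Suc.prems by (intro mult_right_mono) auto
    have "F (q*y) \<le> B + (\<Sum>i\<in>{1..j}. a i)" using Suc.IH[OF _ qy] q0 Suc.prems by simp
    moreover have "F (p*y) \<le> B + (\<Sum>i\<in>{1..j}. a i)" using Suc.IH[of "p*y"] py qy p Suc.prems by simp
    moreover have "G y \<le> a (Suc j)" using lev[of j y] False Suc.prems by simp
    ultimately show ?thesis using rec[OF Suc.prems(1)] S by linarith
  qed
qed

lemma conv:
  fixes x x0 r :: real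
  assumes "x0 > 0" "x > x0" "r > 1"
  defines "u \<equiv> ln (x/x0) / ln r"
  defines "J \<equiv> nat \<lceil>u\<rceil>"
  shows "x \<le> x0 * r^J" "J \<ge> 1" "u > 0" "u \<le> real J" "real J \<le> u + 1"
proof -
  have lr: "ln r > 0" using assms by simp
  show u0: "u > 0" unfolding u_def using assms lr by (auto intro!: divide_pos_pos)
  show uJ: "u \<le> real J" unfolding J_def by linarith
  show "real J \<le> u + 1" unfolding J_def using u0 by linarith
  show "J \<ge> 1" unfolding J_def using u0 by linarith
  have "ln (x/x0) \<le> real J * ln r" using uJ lr unfolding u_def by (simp add: field_simps)
  moreover have "x/x0 = exp (ln (x/x0))" using assms by simp
  ultimately have "x/x0 \<le> exp (real J * ln r)" by (metis exp_le_cancel_iff)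
  also have "exp (real J * ln r) = r^J" by (simp only: exp_of_nat_mult) (use assms in simp)
  finally show "x \<le> x0 * r^J" using assms by (simp add: field_simps)
qed

lemma stolz:
  fixes b d :: "real \<Rightarrow> real" and l :: real
  assumes lim: "((\<lambda>x. (d (x+1) - d x) / b (x+1)) \<longlongrightarrow> l) at_top" and l: "l > 0"
    and pos: "\<And>x. x > 0 \<Longrightarrow> b x > 0"
  shows "\<exists>K c. K \<ge> 0 \<and> (\<forall>J::nat. (\<Sum>k\<in>{1..J}. b (real k)) \<le> K * d (real J) + c)"
proof -
  have "eventually (\<lambda>x. (d (x+1) - d x) / b (x+1) > l/2) at_top"
    using lim l by (intro order_tendstoD) auto
  moreover have "eventually (\<lambda>x. x > (0::real)) at_top" by (rule eventually_gt_at_top)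
  ultimately have "eventually (\<lambda>x. b (x+1) \<le> (2/l) * (d (x+1) - d x)) at_top"
  proof eventually_elim
    case (elim x)
    have bp: "b (x+1) > 0" using pos elim by simp
    hence "l/2 * b (x+1) < d (x+1) - d x" using elim by (simp add: field_simps)
    thus ?case using l by (simp add: field_simps)
  qed
  hence "eventually (\<lambda>n::nat. b (real n+1) \<le> (2/l) * (d (real n+1) - d (real n))) sequentially"
    by (rule eventually_compose_filterlim[OF _ filterlim_real_sequentially])
  then obtain N where N: "\<And>n. n \<ge> N \<Longrightarrow> b (real n+1) \<le> (2/l) * (d (real n+1) - d (real n))"
    by (auto simp: eventually_sequentially)
  define K where "K = 2/l"
  define c where "c = (\<Sum>k\<in>{1..N}. \<bar>b (real k)\<bar>) + K * (\<Sum>k\<le>N. \<bar>d (real k)\<bar>)"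
  have K0: "K \<ge> 0" using l by (simp add: K_def)
  have dN: "\<And>J. J \<le> N \<Longrightarrow> \<bar>d (real J)\<bar> \<le> (\<Sum>k\<le>N. \<bar>d (real k)\<bar>)"
    by (rule member_le_sum[where f="\<lambda>k. \<bar>d (real k)\<bar>", simplified]) auto
  have small: "(\<Sum>k\<in>{1..J}. b (real k)) \<le> (\<Sum>k\<in>{1..N}. \<bar>b (real k)\<bar>)" if "J \<le> N" for J
  proof -
    have "(\<Sum>k\<in>{1..J}. b (real k)) \<le> (\<Sum>k\<in>{1..J}. \<bar>b (real k)\<bar>)" by (intro sum_mono) auto
    also have "\<dots> \<le> (\<Sum>k\<in>{1..N}. \<bar>b (real k)\<bar>)" using that by (intro sum_mono2) auto
    finally show ?thesis .
  qed
  have big: "(\<Sum>k\<in>{1..J}. b (real k)) \<le> K * d (real J) + ((\<Sum>k\<in>{1..N}. b (real k)) - K * d (real N))"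
    if "J \<ge> N" for J
    using that
  proof (induction J rule: dec_induct)
    case base
    then show ?case by simp
  next
    case (step n)
    have "(\<Sum>k\<in>{1..Suc n}. b (real k)) = (\<Sum>k\<in>{1..n}. b (real k)) + b (real n + 1)" by (simp add: add.commute)
    then show ?case using step N[OF step(1)] unfolding K_def by (simp add: algebra_simps)
  qed
  have "(\<Sum>k\<in>{1..J}. b (real k)) \<le> K * d (real J) + c" for J
  proof (cases "J \<le> N")
    case True
    have "- (K * d (real J)) \<le> K * \<bar>d (real J)\<bar>" using K0
      by (metis abs_ge_minus_self abs_mult abs_of_nonneg minus_mult_right)
    also have "\<dots> \<le> K * (\<Sum>k\<le>N. \<bar>d (real k)\<bar>)" using K0 dN[OF True] by (intro mult_left_mono)
    finally show ?thesis using small[OF True] unfolding c_def by linarith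
  next
    case False
    have "(\<Sum>k\<in>{1..N}. b (real k)) \<le> (\<Sum>k\<in>{1..N}. \<bar>b (real k)\<bar>)" by (intro sum_mono) auto
    moreover have "- (K * d (real N)) \<le> K * \<bar>d (real N)\<bar>" using K0
      by (metis abs_ge_minus_self abs_mult abs_of_nonneg minus_mult_right)
    moreover have "K * \<bar>d (real N)\<bar> \<le> K * (\<Sum>k\<le>N. \<bar>d (real k)\<bar>)" using K0 dN[of N] by (intro mult_left_mono) auto
    ultimately show ?thesis using big[of J] False unfolding c_def by linarith
  qed
  thus ?thesis using K0 by blast
qed


lemma Lbound:
  fixes r x0 y :: real
  assumes r: "r > 1" and x0: "x0 \<ge> r" and y1: "x0 * r^j < y" and y2: "y \<le> x0 * r^(Suc j)"
  shows "real (Suc j) * ln r \<le> ln (1+y)" "ln (1+y) \<le> real (Suc j) * (ln (1+x0) + ln r)"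
proof -
  have r0: "r > 0" using r by simp
  have x00: "x0 > 0" using r x0 by simp
  have rj: "r^j > 0" using r0 by simp
  have y0: "y > 0" using y1 x00 rj by (metis less_trans mult_pos_pos)
  have "real (Suc j) * ln r = ln r + real j * ln r" by (simp add: algebra_simps)
  also have "\<dots> \<le> ln x0 + real j * ln r" using x0 r0 by simp
  also have "\<dots> = ln (x0 * r^j)" using x00 r0 by (simp add: ln_mult ln_realpow)
  also have "\<dots> \<le> ln y" using y1 y0 x00 rj by (metis less_imp_le ln_le_cancel_iff mult_pos_pos)
  also have "\<dots> \<le> ln (1+y)" using y0 by simp
  finally show "real (Suc j) * ln r \<le> ln (1+y)" .
  have rk: "r^(Suc j) \<ge> 1" using r by (intro one_le_power) simp
  have "1 + y \<le> 1 + x0 * r^(Suc j)" using y2 by simp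
  also have "\<dots> \<le> (1 + x0) * r^(Suc j)" using rk by (simp add: algebra_simps)
  finally have "ln (1+y) \<le> ln ((1 + x0) * r^(Suc j))" using y0 by simp
  also have "\<dots> = ln (1+x0) + ln (r^(Suc j))" using x00 r0 by (simp add: ln_mult_pos)
  also have "ln (1+x0) + ln (r^(Suc j)) = ln (1+x0) + real (Suc j) * ln r" by (simp only: ln_realpow)
  also have "\<dots> \<le> real (Suc j) * (ln (1+x0) + ln r)"
  proof -
    have h0: "ln (1+x0) \<ge> 0" using x00 by simp
    have "1 * ln (1+x0) \<le> real (Suc j) * ln (1+x0)" by (rule mult_right_mono) (use h0 in auto)
    thus ?thesis using h0 by (simp add: algebra_simps)
  qed
  finally show "ln (1+y) \<le> real (Suc j) * (ln (1+x0) + ln r)" .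
qed

lemma hbound:
  fixes \<alpha> \<beta> r x0 y :: real
  assumes r: "r > 1" and x0: "x0 \<ge> r" and y1: "x0 * r^j < y" and y2: "y \<le> x0 * r^(Suc j)"
  shows "y powr \<alpha> * ln (1+y) powr \<beta> \<le> ((if 0 \<le> \<alpha> then 1 else r powr (-\<alpha>)) * x0 powr \<alpha> *
           (if 0 \<le> \<beta> then ln (1+x0) + ln r else ln r) powr \<beta>) *
           ((r powr \<alpha>) powr real (Suc j) * real (Suc j) powr \<beta>)"
proof -
  define k where "k = Suc j"
  define Y where "Y = x0 * r^k"
  have r0: "r > 0" using r by simp
  have x00: "x0 > 0" using r x0 by simp
  have rj: "r^j > 0" using r0 by simp
  have y0: "y > 0" using y1 x00 rj by (metis less_trans mult_pos_pos)
  have Y0: "Y > 0" using x00 r0 by (simp add: Y_def)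
  have YY: "Y powr \<alpha> = x0 powr \<alpha> * (r powr \<alpha>) powr real k"
  proof -
    have "Y powr \<alpha> = x0 powr \<alpha> * (r^k) powr \<alpha>" unfolding Y_def using x00 r0 by (simp add: powr_mult)
    also have "(r^k) powr \<alpha> = (r powr real k) powr \<alpha>" using r0 by (simp add: powr_realpow)
    also have "\<dots> = (r powr \<alpha>) powr real k" by (simp add: powr_powr mult.commute)
    finally show ?thesis .
  qed
  have p1: "y powr \<alpha> \<le> (if 0 \<le> \<alpha> then 1 else r powr (-\<alpha>)) * Y powr \<alpha>"
  proof (cases "0 \<le> \<alpha>")
    case True
    have "y \<le> Y" using y2 by (simp add: Y_def k_def)
    then show ?thesis using True y0 by (simp add: powr_mono2)
  next
    case False
    have "Y / r = x0 * r^j" using r0 by (simp add: Y_def k_def)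
    hence "Y / r \<le> y" using y1 by simp
    hence "y powr \<alpha> \<le> (Y / r) powr \<alpha>" using False Y0 r0 by (intro powr_mono2') auto
    also have "\<dots> = r powr (-\<alpha>) * Y powr \<alpha>" by (subst powr_divide) (use Y0 r0 in \<open>auto simp: powr_minus field_simps\<close>)
    finally show ?thesis using False by simp
  qed
  define cb where "cb = (if 0 \<le> \<beta> then ln (1+x0) + ln r else ln r)"
  have L1: "real k * ln r \<le> ln (1+y)" and L2: "ln (1+y) \<le> real k * (ln (1+x0) + ln r)"
    using Lbound[OF r x0 y1 y2] by (simp_all add: k_def)
  have lr: "ln r > 0" using r by simp
  have cb0: "cb > 0" using lr x00 by (simp add: cb_def add_pos_nonneg)
  have p2: "ln (1+y) powr \<beta> \<le> cb powr \<beta> * real k powr \<beta>"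
  proof -
    have "ln (1+y) powr \<beta> \<le> (cb * real k) powr \<beta>"
    proof (cases "0 \<le> \<beta>")
      case True
      then show ?thesis using L2 y0 by (intro powr_mono2) (auto simp: cb_def mult.commute)
    next
      case False
      have "cb * real k > 0" using cb0 by (simp add: k_def)
      then show ?thesis using L1 False by (intro powr_mono2') (auto simp: cb_def mult.commute)
    qed
    also have "\<dots> = cb powr \<beta> * real k powr \<beta>" using cb0 by (simp add: powr_mult)
    finally show ?thesis .
  qed
  have "y powr \<alpha> * ln (1+y) powr \<beta> \<le> ((if 0 \<le> \<alpha> then 1 else r powr (-\<alpha>)) * Y powr \<alpha>) * (cb powr \<beta> * real k powr \<beta>)"
    using p1 p2 by (intro mult_mono) auto
  also have "\<dots> = ((if 0 \<le> \<alpha> then 1 else r powr (-\<alpha>)) * x0 powr \<alpha> * cb powr \<beta>) * ((r powr \<alpha>) powr real k * real k powr \<beta>)"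
    by (simp add: YY)
  finally show ?thesis by (simp add: k_def cb_def)
qed

lemma final_O:
  fixes \<phi> :: "real \<Rightarrow> complex" and E :: "real \<Rightarrow> real" and T :: "real \<Rightarrow> complex"
  assumes bnd: "\<And>x. x > x0 \<Longrightarrow> norm (\<phi> x) \<le> P + Q * E x"
    and one: "(\<lambda>_. 1::real) \<in> O(\<lambda>x. norm (T x))" and E: "E \<in> O(\<lambda>x. norm (T x))"
  shows "\<phi> \<in> O(T)"
proof -
  obtain c1 where c1: "c1 > 0" "eventually (\<lambda>x. norm (1::real) \<le> c1 * norm (norm (T x))) at_top"
    using one by (elim landau_o.bigE)
  obtain c2 where c2: "c2 > 0" "eventually (\<lambda>x. norm (E x) \<le> c2 * norm (norm (T x))) at_top"
    using E by (elim landau_o.bigE)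
  have "eventually (\<lambda>x. norm (\<phi> x) \<le> (\<bar>P\<bar> * c1 + \<bar>Q\<bar> * c2 + 1) * norm (T x)) at_top"
    using c1(2) c2(2) eventually_gt_at_top[of x0]
  proof eventually_elim
    case (elim x)
    have "norm (\<phi> x) \<le> P + Q * E x" using bnd elim by simp
    also have "\<dots> \<le> \<bar>P\<bar> * 1 + \<bar>Q\<bar> * \<bar>E x\<bar>" by (simp add: abs_mult[symmetric])
    also have "\<dots> \<le> \<bar>P\<bar> * (c1 * norm (T x)) + \<bar>Q\<bar> * (c2 * norm (T x))"
      using elim by (intro add_mono mult_left_mono) auto
    also have "\<dots> \<le> (\<bar>P\<bar> * c1 + \<bar>Q\<bar> * c2 + 1) * norm (T x)" by (simp add: algebra_simps)
    finally show ?case .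
  qed
  moreover have "0 < \<bar>P\<bar> * c1 + \<bar>Q\<bar> * c2 + 1"
    by (intro add_nonneg_pos add_nonneg_nonneg mult_nonneg_nonneg) (use c1 c2 in auto)
  ultimately show ?thesis by (intro landau_o.bigI[of "\<bar>P\<bar> * c1 + \<bar>Q\<bar> * c2 + 1"]) auto
qed

theorem mainTheorem9:
  fixes p q \<alpha> \<beta> :: real and f g :: "complex \<Rightarrow> complex"
  assumes hp: "0 < p" and hq: "q = 1 - p" and hpq: "p \<le> q"
    and hf: "f holomorphic_on UNIV" and hg: "g holomorphic_on UNIV"
    and feq: "\<And>z. f z = (1 - exp (- (of_real p * z))) * f (of_real p * z)
                      + exp (- (of_real p * z)) * f (of_real q * z) + g z"
    and f0: "f 0 = 0" and g0: "g 0 = 0"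
    and gO: "(\<lambda>x::real. g (of_real x)) \<in> O[at_top](\<lambda>x. x powr \<alpha> * logp x powr \<beta>)"
  shows "(\<alpha> > 0 \<longrightarrow> (\<lambda>x::real. f (of_real x)) \<in> O[at_top](\<lambda>x. x powr \<alpha> * logp x powr \<beta>))
       \<and> (\<alpha> = 0 \<and> \<beta> > -1 \<longrightarrow> (\<lambda>x::real. f (of_real x)) \<in> O[at_top](\<lambda>x. logp x powr (\<beta> + 1)))
       \<and> (\<alpha> = 0 \<and> \<beta> = -1 \<longrightarrow> (\<lambda>x::real. f (of_real x)) \<in> O[at_top](\<lambda>x. logp (logp x)))
       \<and> (\<alpha> = 0 \<and> \<beta> < -1 \<longrightarrow> (\<lambda>x::real. f (of_real x)) \<in> O[at_top](\<lambda>x. 1))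
       \<and> (\<alpha> < 0 \<longrightarrow> (\<lambda>x::real. f (of_real x)) \<in> O[at_top](\<lambda>x. 1))"
  proof -
  define F where "F y = norm (f (of_real y))" for y
  define G where "G y = norm (g (of_real y))" for y
  define r where "r = 1/q"
  have q0: "q > 0" and q1: "q < 1" using hp hq hpq by auto
  have r1: "r > 1" using q0 q1 by (simp add: r_def)
  have rec: "\<And>y. y \<ge> 0 \<Longrightarrow> F y \<le> max (F (p*y)) (F (q*y)) + G y"
    unfolding F_def G_def by (rule rec_ineq[OF feq hp])
  obtain C where C0: "C > 0" and Cev: "eventually (\<lambda>x. norm (g (of_real x)) \<le> C * norm (of_real (x powr \<alpha> * logp x powr \<beta>) :: complex)) at_top"
    using gO by (elim landau_o.bigE)
  obtain x1 where x1: "\<And>x. x \<ge> x1 \<Longrightarrow> G x \<le> C * norm (x powr \<alpha> * logp x powr \<beta>)"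
    using Cev unfolding G_def eventually_at_top_linorder norm_of_real by auto
  define x0 where "x0 = max x1 r"
  have x0r: "x0 \<ge> r" and x0p: "x0 > 0" and x01: "x0 \<ge> x1" using r1 by (auto simp: x0_def)
  have cf: "continuous_on UNIV f" using hf by (rule holomorphic_on_imp_continuous_on)
  have contF: "continuous_on {0..x0} F"
    unfolding F_def by (intro continuous_on_norm continuous_on_compose2[OF cf]) (auto intro: continuous_intros)
  obtain B where B: "\<And>y. y \<in> {0..x0} \<Longrightarrow> norm (F y) \<le> B"
    using continuous_on_compact_bound[OF compact_Icc contF] by blast
  define m where "m = (if 0 \<le> \<alpha> then 1 else r powr (-\<alpha>))"
  define cb where "cb = (if 0 \<le> \<beta> then ln (1+x0) + ln r else ln r)"
  define s where "s = r powr \<alpha>"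
  define bf where "bf x = s powr x * x powr \<beta>" for x :: real
  define A where "A = C * (m * x0 powr \<alpha> * cb powr \<beta>)"
  have s0: "s > 0" using r1 by (simp add: s_def)
  have A0: "A \<ge> 0" using C0 r1 by (simp add: A_def m_def)
  have bf0: "\<And>x. bf x \<ge> 0" by (simp add: bf_def)
  have bfpos: "\<And>x. x > 0 \<Longrightarrow> bf x > 0" using s0 by (simp add: bf_def)
  have lev: "G y \<le> A * bf (real (Suc j))" if y1: "x0 * (1/q)^j < y" and y2: "y \<le> x0*(1/q)^(Suc j)" for j y
  proof -
    have y1': "x0 * r^j < y" and y2': "y \<le> x0 * r^(Suc j)" using y1 y2 by (simp_all add: r_def)
    have "r^j \<ge> 1" using r1 by (intro one_le_power) simp
    hence "x0 \<le> x0 * r^j" using x0p by simp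
    hence yx: "y \<ge> x1" "y > 0" using y1' x01 x0p by linarith+
    have "G y \<le> C * norm (y powr \<alpha> * logp y powr \<beta>)" using x1 yx by simp
    also have "\<dots> = C * (y powr \<alpha> * ln (1+y) powr \<beta>)" by (simp add: logp_def)
    also have "\<dots> \<le> C * ((m * x0 powr \<alpha> * cb powr \<beta>) * ((r powr \<alpha>) powr real (Suc j) * real (Suc j) powr \<beta>))"
      using hbound[OF r1 x0r y1' y2', of \<alpha> \<beta>] C0 unfolding m_def cb_def by (intro mult_left_mono) auto
    also have "\<dots> = A * bf (real (Suc j))" by (simp add: A_def bf_def s_def)
    finally show ?thesis .
  qed
  have main: "F x \<le> B + A * (\<Sum>k\<in>{1..nat \<lceil>ln (x/x0) / ln r\<rceil>}. bf (real k))" if x: "x > x0" for x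
  proof -
    have J: "x \<le> x0 * r ^ nat \<lceil>ln (x/x0) / ln r\<rceil>" using conv[OF x0p x r1] by simp
    have "F x \<le> B + (\<Sum>i\<in>{1..nat \<lceil>ln (x/x0) / ln r\<rceil>}. A * bf (real i))"
    proof (rule levels[OF rec hp hpq q1 x0p])
      show "\<And>y. 0 \<le> y \<Longrightarrow> y \<le> x0 \<Longrightarrow> F y \<le> B" using B by (simp add: F_def)
      show "\<And>j. 0 \<le> A * bf (real j)" using A0 bf0 by simp
      show "\<And>j y. x0 * (1/q)^j < y \<Longrightarrow> y \<le> x0*(1/q)^(Suc j) \<Longrightarrow> G y \<le> A * bf (real (Suc j))"
        by (rule lev)
      show "0 \<le> x" using x x0p by simp
      show "x \<le> x0 * (1/q) ^ nat \<lceil>ln (x/x0) / ln r\<rceil>" using J by (simp add: r_def)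
    qed
    thus ?thesis by (simp add: sum_distrib_left)
  qed
  define u where "u x = ln (x/x0) / ln r" for x
  have convx: "1 \<le> nat \<lceil>u x\<rceil> \<and> u x > 0 \<and> u x \<le> real (nat \<lceil>u x\<rceil>) \<and> real (nat \<lceil>u x\<rceil>) \<le> u x + 1"
    if "x > x0" for x
    using conv[OF x0p that r1] unfolding u_def by blast
  have main': "norm (f (of_real x)) \<le> B + A * (\<Sum>k\<in>{1..nat \<lceil>u x\<rceil>}. bf (real k))" if "x > x0" for x
    using main[OF that] by (simp add: F_def u_def)
  have c1: "(\<lambda>x::real. f (of_real x)) \<in> O[at_top](\<lambda>x. x powr \<alpha> * logp x powr \<beta>)" if a: "\<alpha> > 0"
  proof -
    have s1: "s > 1" using r1 a by (simp add: s_def)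
    have lim: "((\<lambda>x. (bf (x+1) - bf x) / bf (x+1)) \<longlongrightarrow> 1 - 1/s) at_top"
    proof -
      have "((\<lambda>x. (s powr (x+1) * (x+1) powr \<beta> - s powr x * x powr \<beta>) / (s powr (x+1) * (x+1) powr \<beta>)) \<longlongrightarrow> 1 - exp (- ((if ln s = 0 then 0 else 1) * ln s))) at_top"
        using s1 by real_asymp
      moreover have "1 - exp (- ((if ln s = 0 then 0 else 1) * ln s)) = 1 - 1/s" using s1 by (simp add: exp_minus divide_inverse)
      ultimately show ?thesis by (simp add: bf_def)
    qed
    obtain K c where K: "K \<ge> 0" "\<And>J::nat. (\<Sum>k\<in>{1..J}. bf (real k)) \<le> K * bf (real J) + c"
      using stolz[OF lim _ bfpos] s1 by auto
    define E where "E x = s powr (u x + 1) * (u x powr \<beta> + (u x + 1) powr \<beta>)" for x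
    have bnd: "norm (f (of_real x)) \<le> (B + A*c) + (A*K) * E x" if x: "x > x0" for x
    proof -
      define J where "J = nat \<lceil>u x\<rceil>"
      have Jp: "1 \<le> J" "u x > 0" "u x \<le> real J" "real J \<le> u x + 1" using convx[OF x] by (auto simp: J_def)
      have bJ: "bf (real J) \<le> E x"
      proof -
        have "s powr real J \<le> s powr (u x + 1)" using Jp s1 by (intro powr_mono) auto
        moreover have "real J powr \<beta> \<le> u x powr \<beta> + (u x + 1) powr \<beta>"
        proof (cases "\<beta> \<ge> 0")
          case True
          have "real J powr \<beta> \<le> (u x + 1) powr \<beta>" using Jp True by (intro powr_mono2) auto
          then show ?thesis using powr_ge_zero[of "u x" \<beta>] by linarith
        next
          case False
          have "real J powr \<beta> \<le> u x powr \<beta>" using Jp False by (intro powr_mono2') auto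
          then show ?thesis using powr_ge_zero[of "u x + 1" \<beta>] by linarith
        qed
        ultimately show ?thesis unfolding bf_def E_def by (intro mult_mono) auto
      qed
      have "norm (f (of_real x)) \<le> B + A * (\<Sum>k\<in>{1..J}. bf (real k))" using main'[OF x] by (simp add: J_def)
      also have "\<dots> \<le> B + A * (K * bf (real J) + c)" using A0 K by (intro add_left_mono mult_left_mono) auto
      also have "\<dots> \<le> B + A * (K * E x + c)" using A0 K bJ by (intro add_left_mono mult_left_mono add_right_mono) auto
      finally show ?thesis by (simp add: algebra_simps)
    qed
    have one: "(\<lambda>_. 1::real) \<in> O(\<lambda>x. x powr \<alpha> * ln (1+x) powr \<beta>)" using a by real_asymp
    have E: "E \<in> O(\<lambda>x. x powr \<alpha> * ln (1+x) powr \<beta>)" unfolding E_def u_def s_def using a x0p r1 by real_asymp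
    show ?thesis by (rule final_O[OF bnd]) (use one E in \<open>simp_all add: logp_def del: of_real_mult\<close>)
  qed
  have c5: "(\<lambda>x::real. f (of_real x)) \<in> O[at_top](\<lambda>x. 1)" if a: "\<alpha> < 0"
  proof -
    have s1: "s < 1" using powr_less_mono[OF a r1] r1 by (simp add: s_def)
    have lim: "((\<lambda>x. (- bf (x+1) - - bf x) / bf (x+1)) \<longlongrightarrow> 1/s - 1) at_top"
    proof -
      have "((\<lambda>x. (- (s powr (x+1) * (x+1) powr \<beta>) - - (s powr x * x powr \<beta>)) / (s powr (x+1) * (x+1) powr \<beta>)) \<longlongrightarrow> exp (- ((if ln s = 0 then 0 else 1) * ln s)) - 1) at_top"
        using s0 s1 by real_asymp
      moreover have "exp (- ((if ln s = 0 then 0 else 1) * ln s)) - 1 = 1/s - 1" using s0 s1 by (simp add: exp_minus divide_inverse)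
      ultimately show ?thesis by (simp add: bf_def)
    qed
    obtain K c where K: "K \<ge> 0" "\<And>J::nat. (\<Sum>k\<in>{1..J}. bf (real k)) \<le> K * (- bf (real J)) + c"
      using stolz[where d="\<lambda>x. - bf x", OF lim _ bfpos] s0 s1 by (auto simp: field_simps)
    have bnd: "norm (f (of_real x)) \<le> (B + A*c) + 0 * (\<lambda>_. 1) x" if x: "x > x0" for x
    proof -
      have "norm (f (of_real x)) \<le> B + A * (\<Sum>k\<in>{1..nat \<lceil>u x\<rceil>}. bf (real k))" using main'[OF x] by simp
      also have "\<dots> \<le> B + A * c" using A0 K(2)[of "nat \<lceil>u x\<rceil>"] K(1) bf0[of "real (nat \<lceil>u x\<rceil>)"]
        by (intro add_left_mono mult_left_mono) (auto intro: order_trans simp: mult_nonneg_nonneg)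
      finally show ?thesis by simp
    qed
    show ?thesis by (rule final_O[OF bnd]) simp_all
  qed
  have bf_eq: "bf x = x powr \<beta>" if "\<alpha> = 0" for x using that r1 by (simp add: bf_def s_def)
  have c2: "(\<lambda>x::real. f (of_real x)) \<in> O[at_top](\<lambda>x. logp x powr (\<beta> + 1))" if a: "\<alpha> = 0" and b: "\<beta> > -1"
  proof -
    have lim: "((\<lambda>x. ((x+1) powr (\<beta>+1) - x powr (\<beta>+1)) / bf (x+1)) \<longlongrightarrow> \<beta> + 1) at_top"
    proof -
      have "((\<lambda>x. ((x+1) powr (\<beta>+1) - x powr (\<beta>+1)) / (x+1) powr \<beta>) \<longlongrightarrow> \<beta> + 1) at_top"
        using b by real_asymp
      thus ?thesis by (simp add: bf_eq[OF a])
    qed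
    obtain K c where K: "K \<ge> 0" "\<And>J::nat. (\<Sum>k\<in>{1..J}. bf (real k)) \<le> K * (real J powr (\<beta>+1)) + c"
      using stolz[where d="\<lambda>x. x powr (\<beta>+1)", OF lim _ bfpos] b by auto
    define E where "E x = (u x + 1) powr (\<beta>+1)" for x
    have bnd: "norm (f (of_real x)) \<le> (B + A*c) + (A*K) * E x" if x: "x > x0" for x
    proof -
      define J where "J = nat \<lceil>u x\<rceil>"
      have Jp: "1 \<le> J" "u x > 0" "u x \<le> real J" "real J \<le> u x + 1" using convx[OF x] by (auto simp: J_def)
      have bJ: "real J powr (\<beta>+1) \<le> E x" unfolding E_def using Jp b by (intro powr_mono2) auto
      have "norm (f (of_real x)) \<le> B + A * (\<Sum>k\<in>{1..J}. bf (real k))" using main'[OF x] by (simp add: J_def)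
      also have "\<dots> \<le> B + A * (K * real J powr (\<beta>+1) + c)" using A0 K by (intro add_left_mono mult_left_mono) auto
      also have "\<dots> \<le> B + A * (K * E x + c)" using A0 K bJ by (intro add_left_mono mult_left_mono add_right_mono) auto
      finally show ?thesis by (simp add: algebra_simps)
    qed
    have one: "(\<lambda>_. 1::real) \<in> O(\<lambda>x. ln (1+x) powr (\<beta>+1))" using b by real_asymp
    have E: "E \<in> O(\<lambda>x. ln (1+x) powr (\<beta>+1))" unfolding E_def u_def using b x0p r1 by real_asymp
    show ?thesis by (rule final_O[OF bnd]) (use one E in \<open>simp_all add: logp_def del: of_real_mult\<close>)
  qed
  have c3: "(\<lambda>x::real. f (of_real x)) \<in> O[at_top](\<lambda>x. logp (logp x))" if a: "\<alpha> = 0" and b: "\<beta> = -1"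
  proof -
    have lim: "((\<lambda>x. (ln (x+1) - ln x) / bf (x+1)) \<longlongrightarrow> 1) at_top"
    proof -
      have "((\<lambda>x::real. (ln (x+1) - ln x) / (x+1) powr -1) \<longlongrightarrow> 1) at_top" by real_asymp
      thus ?thesis by (simp add: bf_eq[OF a] b)
    qed
    obtain K c where K: "K \<ge> 0" "\<And>J::nat. (\<Sum>k\<in>{1..J}. bf (real k)) \<le> K * ln (real J) + c"
      using stolz[where d="\<lambda>x. ln x", OF lim _ bfpos] by auto
    define E where "E x = ln (u x + 1)" for x
    have bnd: "norm (f (of_real x)) \<le> (B + A*c) + (A*K) * E x" if x: "x > x0" for x
    proof -
      define J where "J = nat \<lceil>u x\<rceil>"
      have Jp: "1 \<le> J" "u x > 0" "u x \<le> real J" "real J \<le> u x + 1" using convx[OF x] by (auto simp: J_def)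
      have bJ: "ln (real J) \<le> E x" unfolding E_def using Jp by simp
      have "norm (f (of_real x)) \<le> B + A * (\<Sum>k\<in>{1..J}. bf (real k))" using main'[OF x] by (simp add: J_def)
      also have "\<dots> \<le> B + A * (K * ln (real J) + c)" using A0 K by (intro add_left_mono mult_left_mono) auto
      also have "\<dots> \<le> B + A * (K * E x + c)" using A0 K bJ by (intro add_left_mono mult_left_mono add_right_mono) auto
      finally show ?thesis by (simp add: algebra_simps)
    qed
    have one: "(\<lambda>_. 1::real) \<in> O(\<lambda>x. ln (1 + ln (1+x)))" by real_asymp
    have E: "E \<in> O(\<lambda>x. ln (1 + ln (1+x)))" unfolding E_def u_def using x0p r1 by real_asymp
    show ?thesis by (rule final_O[OF bnd]) (use one E in \<open>simp_all add: logp_def del: of_real_mult\<close>)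
  qed
  have c4: "(\<lambda>x::real. f (of_real x)) \<in> O[at_top](\<lambda>x. 1)" if a: "\<alpha> = 0" and b: "\<beta> < -1"
  proof -
    have lim: "((\<lambda>x. (- ((x+1) powr (\<beta>+1)) - - (x powr (\<beta>+1))) / bf (x+1)) \<longlongrightarrow> -(\<beta> + 1)) at_top"
    proof -
      have "((\<lambda>x. (- ((x+1) powr (\<beta>+1)) - - (x powr (\<beta>+1))) / (x+1) powr \<beta>) \<longlongrightarrow> -(\<beta> + 1)) at_top"
        using b by real_asymp
      thus ?thesis by (simp add: bf_eq[OF a])
    qed
    obtain K c where K: "K \<ge> 0" "\<And>J::nat. (\<Sum>k\<in>{1..J}. bf (real k)) \<le> K * (- (real J powr (\<beta>+1))) + c"
      using stolz[where d="\<lambda>x. - (x powr (\<beta>+1))", OF lim _ bfpos] b by auto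
    have bnd: "norm (f (of_real x)) \<le> (B + A*c) + 0 * (\<lambda>_. 1) x" if x: "x > x0" for x
    proof -
      have "norm (f (of_real x)) \<le> B + A * (\<Sum>k\<in>{1..nat \<lceil>u x\<rceil>}. bf (real k))" using main'[OF x] by simp
      also have "\<dots> \<le> B + A * c" using A0 K(2)[of "nat \<lceil>u x\<rceil>"] K(1) powr_ge_zero[of "real (nat \<lceil>u x\<rceil>)" "\<beta>+1"]
        by (intro add_left_mono mult_left_mono) (auto intro: order_trans simp: mult_nonneg_nonneg)
      finally show ?thesis by simp
    qed
    show ?thesis by (rule final_O[OF bnd]) simp_all
  qed
  show ?thesis using c1 c2 c3 c4 c5 by blast
qed

end
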